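(* Let $r\ge 6$ and $n\ge 3$, and let $v=(u_1,1)\in V(C_r\times K_n)$. Then the subcomplex $st(v)\cap SC(v)$ of $I(C_r\times K_n)$ is the union of subcomplexes $X_1,\dots,X_{n-1},Y_1,\dots,Y_{n-1}$ such that: (1) for every $i$, $X_i\cong Y_i\cong I(G_{r-4,n})$; (2) if $r\ge7$, for every $i$, $X_i\cap Y_i\cong I(\mathring W_{r-5,n})$; (3) if $r\ge 7$, for every $i\ne j$, $X_i\cap Y_j\cong I(\mathring H_{r-5,n})$; (4) for every $i\ne j$, $X_i\cap X_j$ and $Y_i\cap Y_j$ are contractible; (5) the intersection of any $m\ge 3$ distinct complexes among $X_1,\dots,X_{n-1},Y_1,\dots,Y_{n-1}$ is contractible.
   Context: $C_r$ is the cycle with vertices $u_1,\dots,u_r$ (edges $u_iu_{i+1}$ and $u_ru_1$); $K_n$ is the complete graph on $\{1,\dots,n\}$; $C_r\times K_n$ is the categorical product ($(u_i,a)$ adjacent to $(u_{i'},b)$ iff $u_iu_{i'}$ is an edge of $C_r$ and $a\ne b$). $P_k$ is the path $u_1,\dots,u_k$ and $P_k\times K_n$ is defined analogously. For $k\ge2$: $W_{k,n}$ is obtained from $P_k\times K_n$ by adding vertices $v_1,v_2$ and edges $(u_1,i)v_1$ ($i\ne2$), $(u_k,i)v_2$ ($i\ne2$); $H_{k,n}$ is obtained from $P_k\times K_n$ by adding vertices $v_1,v_2$ and edges $(u_1,i)v_1$ ($i\ge2$), $(u_k,i)v_2$ ($i\ne2$); $G_{k,n}$ is $H_{k,n}$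 plus vertices $w_1,w_2$ and edges $v_1w_1,w_1w_2,w_2v_2$; $\mathring W_{k,n}$ is $W_{k,n}$ plus vertices $w_1,w,w_2$ and edges $w_1w,ww_2,v_1w_1,v_2w_2$; $\mathring H_{k,n}$ is $H_{k,n}$ plus vertices $w_1,w_2$ and edges $v_1w_1,v_2w_2$. $I(G)$ is the independence complex (simplices = non-empty independent vertex sets). In a simplicial complex $K$, $st(\sigma)=\{\tau\in K:\tau\cup\sigma\in K\}$; in $I(G)$, the star cluster of a vertex $v$ is $SC(v)=\bigcup_{u\in N(v)}st(u)$, where $N(v)$ is the set of neighbours of $v$ in $G$. $\cong$ denotes isomorphism of simplicial complexes. *)

theory Defs
  imports "HOL-Analysis.Analysis"
begin

definition simplicial_complex :: "'v set set \<Rightarrow> bool" where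
  "simplicial_complex K \<longleftrightarrow>
     (\<forall>\<sigma>\<in>K. finite \<sigma> \<and> \<sigma> \<noteq> {} \<and> (\<forall>\<tau>. \<tau> \<subseteq> \<sigma> \<and> \<tau> \<noteq> {} \<longrightarrow> \<tau> \<in> K))"

definition subcomplex :: "'v set set \<Rightarrow> 'v set set \<Rightarrow> bool" where
  "subcomplex L K \<longleftrightarrow> simplicial_complex L \<and> L \<subseteq> K"

definition complex_iso :: "'v set set \<Rightarrow> 'w set set \<Rightarrow> bool" (infix "\<cong>\<^sub>s" 50) where
  "K \<cong>\<^sub>s L \<longleftrightarrow> (\<exists>f. bij_betw f (\<Union>K) (\<Union>L) \<and> (\<forall>\<sigma>. \<sigma> \<subseteq> \<Union>K \<longrightarrow> (\<sigma> \<in> K \<longleftrightarrow> f ` \<sigma> \<in> L)))"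

definition star :: "'v set set \<Rightarrow> 'v set \<Rightarrow> 'v set set" where
  "star K \<sigma> = {\<tau> \<in> K. \<tau> \<union> \<sigma> \<in> K}"

text \<open>Geometric realisation: points are barycentric coordinate functions whose support
is a simplex, with the (product = Euclidean, for finite complexes) topology.\<close>

definition geom_points :: "'v set set \<Rightarrow> ('v \<Rightarrow> real) set" where
  "geom_points K = {f. {x. f x \<noteq> 0} \<in> K \<and> (\<forall>x. 0 \<le> f x) \<and> sum f {x. f x \<noteq> 0} = 1}"

definition geom_real :: "'v set set \<Rightarrow> ('v \<Rightarrow> real) topology" where
  "geom_real K = subtopology (powertop_real UNIV) (geom_points K)"

definition contractible_complex :: "'v set set \<Rightarrow> bool" where
  "contractible_complex K \<longleftrightarrow> K \<noteq> {} \<and> contractible_space (geom_real K)"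

definition indep_complex :: "'v set \<Rightarrow> ('v \<Rightarrow> 'v \<Rightarrow> bool) \<Rightarrow> 'v set set" where
  "indep_complex V E = {\<sigma>. \<sigma> \<noteq> {} \<and> finite \<sigma> \<and> \<sigma> \<subseteq> V \<and> (\<forall>x\<in>\<sigma>. \<forall>y\<in>\<sigma>. \<not> E x y)}"

definition nbhd :: "'v set \<Rightarrow> ('v \<Rightarrow> 'v \<Rightarrow> bool) \<Rightarrow> 'v \<Rightarrow> 'v set" where
  "nbhd V E v = {u \<in> V. E v u}"

definition star_cluster :: "'v set \<Rightarrow> ('v \<Rightarrow> 'v \<Rightarrow> bool) \<Rightarrow> 'v \<Rightarrow> 'v set set" where
  "star_cluster V E v = (\<Union>u\<in>nbhd V E v. star (indep_complex V E) {u})"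

definition cyc_adj :: "nat \<Rightarrow> nat \<Rightarrow> nat \<Rightarrow> bool" where
  "cyc_adj r i j \<longleftrightarrow> j = i + 1 \<or> i = j + 1 \<or> (i = 1 \<and> j = r) \<or> (i = r \<and> j = 1)"

definition CK_V :: "nat \<Rightarrow> nat \<Rightarrow> (nat \<times> nat) set" where
  "CK_V r n = {1..r} \<times> {1..n}"

definition CK_E :: "nat \<Rightarrow> (nat \<times> nat) \<Rightarrow> (nat \<times> nat) \<Rightarrow> bool" where
  "CK_E r x y \<longleftrightarrow> cyc_adj r (fst x) (fst y) \<and> snd x \<noteq> snd y"

datatype gvert = P nat nat | V1 | V2 | W1 | Wm | W2

definition PK_V :: "nat \<Rightarrow> nat \<Rightarrow> gvert set" where
  "PK_V k n = {P i a | i a. 1 \<le> i \<and> i \<le> k \<and> 1 \<le> a \<and> a \<le> n}"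

definition PK_R :: "gvert \<Rightarrow> gvert \<Rightarrow> bool" where
  "PK_R x y \<longleftrightarrow> (\<exists>i a b. x = P i a \<and> y = P (i + 1) b \<and> a \<noteq> b)"

definition symc :: "('v \<Rightarrow> 'v \<Rightarrow> bool) \<Rightarrow> 'v \<Rightarrow> 'v \<Rightarrow> bool" where
  "symc R x y \<longleftrightarrow> R x y \<or> R y x"

definition W_V :: "nat \<Rightarrow> nat \<Rightarrow> gvert set" where
  "W_V k n = PK_V k n \<union> {V1, V2}"
definition W_R :: "nat \<Rightarrow> gvert \<Rightarrow> gvert \<Rightarrow> bool" where
  "W_R k x y \<longleftrightarrow> PK_R x y \<or> (\<exists>i. i \<noteq> 2 \<and> x = P 1 i \<and> y = V1) \<or> (\<exists>i. i \<noteq> 2 \<and> x = P k i \<and> y = V2)"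

definition H_V :: "nat \<Rightarrow> nat \<Rightarrow> gvert set" where
  "H_V k n = PK_V k n \<union> {V1, V2}"
definition H_R :: "nat \<Rightarrow> gvert \<Rightarrow> gvert \<Rightarrow> bool" where
  "H_R k x y \<longleftrightarrow> PK_R x y \<or> (\<exists>i. 2 \<le> i \<and> x = P 1 i \<and> y = V1) \<or> (\<exists>i. i \<noteq> 2 \<and> x = P k i \<and> y = V2)"

definition G_V :: "nat \<Rightarrow> nat \<Rightarrow> gvert set" where
  "G_V k n = H_V k n \<union> {W1, W2}"
definition G_R :: "nat \<Rightarrow> gvert \<Rightarrow> gvert \<Rightarrow> bool" where
  "G_R k x y \<longleftrightarrow> H_R k x y \<or> (x = V1 \<and> y = W1) \<or> (x = W1 \<and> y = W2) \<or> (x = W2 \<and> y = V2)"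

definition Wr_V :: "nat \<Rightarrow> nat \<Rightarrow> gvert set" where
  "Wr_V k n = W_V k n \<union> {W1, Wm, W2}"
definition Wr_R :: "nat \<Rightarrow> gvert \<Rightarrow> gvert \<Rightarrow> bool" where
  "Wr_R k x y \<longleftrightarrow> W_R k x y \<or> (x = W1 \<and> y = Wm) \<or> (x = Wm \<and> y = W2) \<or> (x = V1 \<and> y = W1) \<or> (x = V2 \<and> y = W2)"

definition Hr_V :: "nat \<Rightarrow> nat \<Rightarrow> gvert set" where
  "Hr_V k n = H_V k n \<union> {W1, W2}"
definition Hr_R :: "nat \<Rightarrow> gvert \<Rightarrow> gvert \<Rightarrow> bool" where
  "Hr_R k x y \<longleftrightarrow> H_R k x y \<or> (x = V1 \<and> y = W1) \<or> (x = V2 \<and> y = W2)"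

definition I_G :: "nat \<Rightarrow> nat \<Rightarrow> gvert set set" where
  "I_G k n = indep_complex (G_V k n) (symc (G_R k))"
definition I_Wr :: "nat \<Rightarrow> nat \<Rightarrow> gvert set set" where
  "I_Wr k n = indep_complex (Wr_V k n) (symc (Wr_R k))"
definition I_Hr :: "nat \<Rightarrow> nat \<Rightarrow> gvert set set" where
  "I_Hr k n = indep_complex (Hr_V k n) (symc (Hr_R k))"

end

theory Submission
  imports Defs
begin
lemma Union_indep:
  assumes "\<And>x. x \<in> V \<Longrightarrow> \<not> E x x"
  shows "\<Union>(indep_complex V E) = V"
proof
  show "\<Union>(indep_complex V E) \<subseteq> V" by (auto simp: indep_complex_def)
  show "V \<subseteq> \<Union>(indep_complex V E)"
  proof
    fix x assume "x \<in> V"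
    then have "{x} \<in> indep_complex V E" using assms by (auto simp: indep_complex_def)
    then show "x \<in> \<Union>(indep_complex V E)" by blast
  qed
qed

lemma indep_iso:
  assumes bij: "bij_betw g V' V"
    and edges: "\<And>x y. x \<in> V' \<Longrightarrow> y \<in> V' \<Longrightarrow> E' x y \<longleftrightarrow> E (g x) (g y)"
    and irr: "\<And>x. x \<in> V \<Longrightarrow> \<not> E x x" and irr': "\<And>x. x \<in> V' \<Longrightarrow> \<not> E' x x"
  shows "indep_complex V E \<cong>\<^sub>s indep_complex V' E'"
proof -
  define f where "f = inv_into V' g"
  have bf: "bij_betw f V V'" unfolding f_def by (rule bij_betw_inv_into[OF bij])
  have gf: "\<And>x. x \<in> V \<Longrightarrow> g (f x) = x" unfolding f_def using bij
    by (simp add: bij_betw_inv_into_right)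
  have "\<sigma> \<in> indep_complex V E \<longleftrightarrow> f ` \<sigma> \<in> indep_complex V' E'" if s: "\<sigma> \<subseteq> V" for \<sigma>
  proof -
    have inj: "inj_on f \<sigma>" using bf s by (meson bij_betw_def inj_on_subset)
    have fin: "finite (f ` \<sigma>) \<longleftrightarrow> finite \<sigma>" using finite_image_iff[OF inj] .
    have sub: "f ` \<sigma> \<subseteq> V'" using bf s by (auto simp: bij_betw_def)
    have ind: "(\<forall>x\<in>f ` \<sigma>. \<forall>y\<in>f ` \<sigma>. \<not> E' x y) \<longleftrightarrow> (\<forall>x\<in>\<sigma>. \<forall>y\<in>\<sigma>. \<not> E x y)"
    proof -
      have "(\<forall>x\<in>f ` \<sigma>. \<forall>y\<in>f ` \<sigma>. \<not> E' x y) \<longleftrightarrow> (\<forall>x\<in>\<sigma>. \<forall>y\<in>\<sigma>. \<not> E' (f x) (f y))" by blast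
      also have "\<dots> \<longleftrightarrow> (\<forall>x\<in>\<sigma>. \<forall>y\<in>\<sigma>. \<not> E (g (f x)) (g (f y)))"
        using edges sub by blast
      also have "\<dots> \<longleftrightarrow> (\<forall>x\<in>\<sigma>. \<forall>y\<in>\<sigma>. \<not> E x y)" using gf s by (metis subsetD)
      finally show ?thesis .
    qed
    show ?thesis unfolding indep_complex_def using fin sub ind s by auto
  qed
  moreover have U1: "\<Union>(indep_complex V E) = V" by (rule Union_indep) (rule irr)
  moreover have U2: "\<Union>(indep_complex V' E') = V'" by (rule Union_indep) (rule irr')
  ultimately show ?thesis unfolding complex_iso_def
    using bf by (intro exI[of _ f] conjI allI impI) auto
qed

lemma star_indep:
  assumes "u \<in> V" "\<not> E u u"
  shows "star (indep_complex V E) {u} = indep_complex {x \<in> V. \<not> E x u \<and> \<not> E u x} E"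
  unfolding star_def indep_complex_def using assms by blast

lemma indep_Int: "indep_complex U E \<inter> indep_complex U' E = indep_complex (U \<inter> U') E"
  unfolding indep_complex_def by blast

lemma indep_insert:
  assumes "\<sigma> \<in> indep_complex U E" "x \<in> U" "\<not> E x x" "\<forall>y\<in>\<sigma>. \<not> E x y \<and> \<not> E y x"
  shows "insert x \<sigma> \<in> indep_complex U E"
  using assms unfolding indep_complex_def by blast

lemma indep_single:
  assumes "x \<in> U" "\<not> E x x"
  shows "{x} \<in> indep_complex U E"
  using assms unfolding indep_complex_def by blast

lemma indep_sc: "simplicial_complex (indep_complex V E)"
  unfolding simplicial_complex_def
proof (intro ballI conjI allI impI)
  fix \<sigma> \<tau> assume s: "\<sigma> \<in> indep_complex V E" and t: "\<tau> \<subseteq> \<sigma> \<and> \<tau> \<noteq> {}"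
  then have "finite \<tau>" using finite_subset unfolding indep_complex_def by blast
  then show "\<tau> \<in> indep_complex V E" using s t unfolding indep_complex_def by blast
qed (auto simp: indep_complex_def)

lemma indep_sub: "U \<subseteq> V \<Longrightarrow> subcomplex (indep_complex U E) (indep_complex V E)"
  unfolding subcomplex_def using indep_sc[of U E] unfolding indep_complex_def by blast

definition tr :: "nat \<Rightarrow> nat \<Rightarrow> nat \<Rightarrow> nat" where
  "tr a b x = (if x = a then b else if x = b then a else x)"

lemma tr_inv[simp]: "tr a b (tr a b x) = x" by (auto simp: tr_def)
lemma tr_inj[simp]: "tr a b x = tr a b y \<longleftrightarrow> x = y" by (metis tr_inv)

definition VX :: "nat \<Rightarrow> nat \<Rightarrow> nat \<Rightarrow> (nat \<times> nat) set" where
  "VX r n a = {x \<in> CK_V r n. \<not> CK_E r x (1,1) \<and> \<not> CK_E r x (2,a)}"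
definition VY :: "nat \<Rightarrow> nat \<Rightarrow> nat \<Rightarrow> (nat \<times> nat) set" where
  "VY r n a = {x \<in> CK_V r n. \<not> CK_E r x (1,1) \<and> \<not> CK_E r x (r,a)}"

lemma CK_irr: "\<not> CK_E r x x" by (simp add: CK_E_def)
lemma CK_sym: "CK_E r x y \<longleftrightarrow> CK_E r y x" by (auto simp: CK_E_def cyc_adj_def)

lemma symcG_simps:
  "symc (G_R k) (P j c) (P j' d) \<longleftrightarrow> (j' = j+1 \<or> j = j'+1) \<and> c \<noteq> d"
  "symc (G_R k) (P j c) V1 \<longleftrightarrow> j = 1 \<and> 2 \<le> c"
  "symc (G_R k) V1 (P j c) \<longleftrightarrow> j = 1 \<and> 2 \<le> c"
  "symc (G_R k) (P j c) V2 \<longleftrightarrow> j = k \<and> c \<noteq> 2"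
  "symc (G_R k) V2 (P j c) \<longleftrightarrow> j = k \<and> c \<noteq> 2"
  "\<not> symc (G_R k) (P j c) W1" "\<not> symc (G_R k) W1 (P j c)"
  "\<not> symc (G_R k) (P j c) W2" "\<not> symc (G_R k) W2 (P j c)"
  "symc (G_R k) V1 W1" "symc (G_R k) W1 V1" "symc (G_R k) W1 W2" "symc (G_R k) W2 W1"
  "symc (G_R k) V2 W2" "symc (G_R k) W2 V2"
  "\<not> symc (G_R k) V1 V1" "\<not> symc (G_R k) V2 V2" "\<not> symc (G_R k) W1 W1" "\<not> symc (G_R k) W2 W2"
  "\<not> symc (G_R k) V1 V2" "\<not> symc (G_R k) V2 V1" "\<not> symc (G_R k) V1 W2" "\<not> symc (G_R k) W2 V1"
  "\<not> symc (G_R k) W1 V2" "\<not> symc (G_R k) V2 W1"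
  by (auto simp: symc_def G_R_def H_R_def PK_R_def)

lemma symcWr_simps:
  "symc (Wr_R k) (P j c) (P j' d) \<longleftrightarrow> (j' = j+1 \<or> j = j'+1) \<and> c \<noteq> d"
  "symc (Wr_R k) (P j c) V1 \<longleftrightarrow> j = 1 \<and> c \<noteq> 2"
  "symc (Wr_R k) V1 (P j c) \<longleftrightarrow> j = 1 \<and> c \<noteq> 2"
  "symc (Wr_R k) (P j c) V2 \<longleftrightarrow> j = k \<and> c \<noteq> 2"
  "symc (Wr_R k) V2 (P j c) \<longleftrightarrow> j = k \<and> c \<noteq> 2"
  "\<not> symc (Wr_R k) (P j c) W1" "\<not> symc (Wr_R k) W1 (P j c)"
  "\<not> symc (Wr_R k) (P j c) W2" "\<not> symc (Wr_R k) W2 (P j c)"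
  "\<not> symc (Wr_R k) (P j c) Wm" "\<not> symc (Wr_R k) Wm (P j c)"
  "symc (Wr_R k) V1 W1" "symc (Wr_R k) W1 V1" "symc (Wr_R k) W1 Wm" "symc (Wr_R k) Wm W1"
  "symc (Wr_R k) Wm W2" "symc (Wr_R k) W2 Wm"
  "symc (Wr_R k) V2 W2" "symc (Wr_R k) W2 V2"
  "\<not> symc (Wr_R k) V1 V1" "\<not> symc (Wr_R k) V2 V2" "\<not> symc (Wr_R k) W1 W1" "\<not> symc (Wr_R k) W2 W2"
  "\<not> symc (Wr_R k) Wm Wm"
  "\<not> symc (Wr_R k) V1 V2" "\<not> symc (Wr_R k) V2 V1" "\<not> symc (Wr_R k) V1 W2" "\<not> symc (Wr_R k) W2 V1"
  "\<not> symc (Wr_R k) W1 V2" "\<not> symc (Wr_R k) V2 W1"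
  "\<not> symc (Wr_R k) V1 Wm" "\<not> symc (Wr_R k) Wm V1" "\<not> symc (Wr_R k) V2 Wm" "\<not> symc (Wr_R k) Wm V2"
  "\<not> symc (Wr_R k) W1 W2" "\<not> symc (Wr_R k) W2 W1"
  by (auto simp: symc_def Wr_R_def W_R_def PK_R_def)

lemma symcHr_simps:
  "symc (Hr_R k) (P j c) (P j' d) \<longleftrightarrow> (j' = j+1 \<or> j = j'+1) \<and> c \<noteq> d"
  "symc (Hr_R k) (P j c) V1 \<longleftrightarrow> j = 1 \<and> 2 \<le> c"
  "symc (Hr_R k) V1 (P j c) \<longleftrightarrow> j = 1 \<and> 2 \<le> c"
  "symc (Hr_R k) (P j c) V2 \<longleftrightarrow> j = k \<and> c \<noteq> 2"
  "symc (Hr_R k) V2 (P j c) \<longleftrightarrow> j = k \<and> c \<noteq> 2"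
  "\<not> symc (Hr_R k) (P j c) W1" "\<not> symc (Hr_R k) W1 (P j c)"
  "\<not> symc (Hr_R k) (P j c) W2" "\<not> symc (Hr_R k) W2 (P j c)"
  "symc (Hr_R k) V1 W1" "symc (Hr_R k) W1 V1"
  "symc (Hr_R k) V2 W2" "symc (Hr_R k) W2 V2"
  "\<not> symc (Hr_R k) V1 V1" "\<not> symc (Hr_R k) V2 V2" "\<not> symc (Hr_R k) W1 W1" "\<not> symc (Hr_R k) W2 W2"
  "\<not> symc (Hr_R k) V1 V2" "\<not> symc (Hr_R k) V2 V1" "\<not> symc (Hr_R k) V1 W2" "\<not> symc (Hr_R k) W2 V1"
  "\<not> symc (Hr_R k) W1 V2" "\<not> symc (Hr_R k) V2 W1"
  "\<not> symc (Hr_R k) W1 W2" "\<not> symc (Hr_R k) W2 W1"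
  by (auto simp: symc_def Hr_R_def H_R_def PK_R_def)

lemma adj_1: "1 \<le> p \<Longrightarrow> p \<le> r \<Longrightarrow> 6 \<le> r \<Longrightarrow> cyc_adj r p 1 \<longleftrightarrow> p = 2 \<or> p = r"
  by (auto simp: cyc_adj_def)
lemma adj_2: "1 \<le> p \<Longrightarrow> p \<le> r \<Longrightarrow> 6 \<le> r \<Longrightarrow> cyc_adj r p 2 \<longleftrightarrow> p = 1 \<or> p = 3"
  by (auto simp: cyc_adj_def)
lemma adj_r: "1 \<le> p \<Longrightarrow> p \<le> r \<Longrightarrow> 6 \<le> r \<Longrightarrow> cyc_adj r p r \<longleftrightarrow> p = r - 1 \<or> p = 1"
  by (auto simp: cyc_adj_def)

lemma mem_VX: "6 \<le> r \<Longrightarrow> (p,c) \<in> VX r n a \<longleftrightarrow> 1 \<le> p \<and> p \<le> r \<and> 1 \<le> c \<and> c \<le> n \<and>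
   ((p = 2 \<or> p = r) \<longrightarrow> c = 1) \<and> ((p = 1 \<or> p = 3) \<longrightarrow> c = a)"
  unfolding VX_def CK_V_def CK_E_def by (auto simp: cyc_adj_def)
lemma mem_VY: "6 \<le> r \<Longrightarrow> (p,c) \<in> VY r n a \<longleftrightarrow> 1 \<le> p \<and> p \<le> r \<and> 1 \<le> c \<and> c \<le> n \<and>
   ((p = 2 \<or> p = r) \<longrightarrow> c = 1) \<and> ((p = 1 \<or> p = r - 1) \<longrightarrow> c = a)"
  unfolding VY_def CK_V_def CK_E_def by (auto simp: cyc_adj_def)

lemma mem_G_V[simp]:
  "P j c \<in> G_V k n \<longleftrightarrow> 1 \<le> j \<and> j \<le> k \<and> 1 \<le> c \<and> c \<le> n"
  "V1 \<in> G_V k n" "V2 \<in> G_V k n" "W1 \<in> G_V k n" "W2 \<in> G_V k n" "Wm \<notin> G_V k n"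
  by (auto simp: G_V_def H_V_def PK_V_def)
lemma mem_Wr_V[simp]:
  "P j c \<in> Wr_V k n \<longleftrightarrow> 1 \<le> j \<and> j \<le> k \<and> 1 \<le> c \<and> c \<le> n"
  "V1 \<in> Wr_V k n" "V2 \<in> Wr_V k n" "W1 \<in> Wr_V k n" "W2 \<in> Wr_V k n" "Wm \<in> Wr_V k n"
  by (auto simp: Wr_V_def W_V_def PK_V_def)
lemma mem_Hr_V[simp]:
  "P j c \<in> Hr_V k n \<longleftrightarrow> 1 \<le> j \<and> j \<le> k \<and> 1 \<le> c \<and> c \<le> n"
  "V1 \<in> Hr_V k n" "V2 \<in> Hr_V k n" "W1 \<in> Hr_V k n" "W2 \<in> Hr_V k n" "Wm \<notin> Hr_V k n"
  by (auto simp: Hr_V_def H_V_def PK_V_def)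

lemma CK_E_pair: "CK_E r (p,c) (q,d) \<longleftrightarrow> cyc_adj r p q \<and> c \<noteq> d"
  by (simp add: CK_E_def)

lemma tr_vals: "2 \<le> a \<Longrightarrow> tr 2 a c = 1 \<longleftrightarrow> c = 1" "2 \<le> a \<Longrightarrow> tr 2 a c = a \<longleftrightarrow> c = 2"
    "2 \<le> a \<Longrightarrow> 1 = tr 2 a c \<longleftrightarrow> c = 1" "2 \<le> a \<Longrightarrow> a = tr 2 a c \<longleftrightarrow> c = 2"
    "2 \<le> a \<Longrightarrow> tr 2 a c = Suc 0 \<longleftrightarrow> c = 1" "2 \<le> a \<Longrightarrow> Suc 0 = tr 2 a c \<longleftrightarrow> c = 1"
  by (auto simp: tr_def)

lemma cone_contractible:
  assumes x: "{x} \<in> K" and ins: "\<And>\<sigma>. \<sigma> \<in> K \<Longrightarrow> insert x \<sigma> \<in> K"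
  shows "contractible_complex K"
proof -
  define d where "d = (\<lambda>y. if y = x then (1::real) else 0)"
  define h where "h = (\<lambda>(t::real, f::'a \<Rightarrow> real). (\<lambda>y. (1 - t) * f y + t * d y))"
  have cont: "continuous_map (prod_topology (top_of_set {0..1}) (geom_real K)) (powertop_real UNIV) h"
    unfolding continuous_map_componentwise_UNIV geom_real_def h_def
  proof
    fix y
    have c1: "continuous_map (prod_topology (top_of_set {0..1}) (subtopology (powertop_real UNIV) (geom_points K))) euclideanreal (\<lambda>p. fst p)"
      by (metis continuous_map_fst continuous_map_into_fulltopology)
    have c2: "continuous_map (prod_topology (top_of_set {0..1}) (subtopology (powertop_real UNIV) (geom_points K))) euclideanreal (\<lambda>p. snd p y)"
      using continuous_map_compose[OF continuous_map_snd continuous_map_from_subtopology[OF continuous_map_product_projection[of y UNIV "\<lambda>_. euclideanreal"]]]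
      by (simp add: o_def)
    show "continuous_map (prod_topology (top_of_set {0..1}) (subtopology (powertop_real UNIV) (geom_points K))) euclideanreal
          (\<lambda>p. (case p of (t, f) \<Rightarrow> \<lambda>y. (1 - t) * f y + t * d y) y)"
      using c1 c2 by (simp add: case_prod_beta, intro continuous_intros; simp)
  qed
  have img: "h (t, f) \<in> geom_points K" if t: "t \<in> {0..1}" and f: "f \<in> geom_points K" for t f
  proof -
    let ?S = "{y. f y \<noteq> 0}"
    have S: "?S \<in> K" "\<forall>y. 0 \<le> f y" "sum f ?S = 1" using f by (auto simp: geom_points_def)
    have fin: "finite ?S" using S(3) by (metis sum.infinite zero_neq_one)
    let ?g = "h (t, f)"
    have nn: "\<forall>y. 0 \<le> ?g y" using S(2) t by (auto simp: h_def d_def)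
    have supp: "{y. ?g y \<noteq> 0} \<in> K"
    proof -
      consider "t = 0" | "t = 1" | "0 < t \<and> t < 1" using t by fastforce
      then show ?thesis
      proof cases
        case 1 then show ?thesis using S by (simp add: h_def)
      next
        case 2 then have "{y. ?g y \<noteq> 0} = {x}" by (auto simp: h_def d_def)
        then show ?thesis using x by simp
      next
        case 3
        have "{y. ?g y \<noteq> 0} = insert x ?S"
        proof (rule set_eqI)
          fix y show "y \<in> {y. ?g y \<noteq> 0} \<longleftrightarrow> y \<in> insert x ?S"
          proof (cases "y = x")
            case True
            have "0 \<le> (1 - t) * f y" using S(2) 3 by simp
            then show ?thesis using True 3 by (simp add: h_def d_def)
          next
            case False then show ?thesis using 3 by (simp add: h_def d_def)
          qed
        qed
        then show ?thesis using ins[OF S(1)] by simp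
      qed
    qed
    have sub: "{y. ?g y \<noteq> 0} \<subseteq> insert x ?S" by (auto simp: h_def d_def)
    have "sum ?g {y. ?g y \<noteq> 0} = sum ?g (insert x ?S)"
      by (rule sum.mono_neutral_left) (use fin sub in auto)
    also have "\<dots> = (1 - t) * sum f (insert x ?S) + t * sum d (insert x ?S)"
      by (simp add: h_def sum.distrib sum_distrib_left)
    also have "sum f (insert x ?S) = 1"
    proof -
      have "sum f (insert x ?S) = sum f ?S" by (rule sum.mono_neutral_right) (use fin in auto)
      then show ?thesis using S by simp
    qed
    also have "sum d (insert x ?S) = 1"
    proof -
      have "sum d (insert x ?S) = sum d {x}" by (rule sum.mono_neutral_right) (use fin in \<open>auto simp: d_def\<close>)
      then show ?thesis by (simp add: d_def)
    qed
    finally show ?thesis using nn supp by (simp add: geom_points_def)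
  qed
  have "homotopic_with (\<lambda>x. True) (geom_real K) (geom_real K) id (\<lambda>_. d)"
    unfolding homotopic_with_def
  proof (intro exI conjI allI ballI)
    show "continuous_map (prod_topology (top_of_set {0..1}) (geom_real K)) (geom_real K) h"
      unfolding geom_real_def continuous_map_in_subtopology
    proof
      show "continuous_map (prod_topology (top_of_set {0..1}) (subtopology (powertop_real UNIV) (geom_points K))) (powertop_real UNIV) h"
        using cont by (simp add: geom_real_def)
      show "h \<in> topspace (prod_topology (top_of_set {0..1}) (subtopology (powertop_real UNIV) (geom_points K))) \<rightarrow> geom_points K"
        using img by (auto simp: topspace_prod_topology)
    qed
  qed (auto simp: h_def d_def)
  moreover have "K \<noteq> {}" using x by auto
  ultimately show ?thesis unfolding contractible_complex_def contractible_space_def by blast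
qed

definition gX :: "nat \<Rightarrow> nat \<Rightarrow> gvert \<Rightarrow> nat \<times> nat" where
  "gX r a x = (case x of P j c \<Rightarrow> (r - j, tr 2 a c) | V1 \<Rightarrow> (r,1) | W1 \<Rightarrow> (1,a) | W2 \<Rightarrow> (2,1) | V2 \<Rightarrow> (3,a) | Wm \<Rightarrow> (0,0))"
definition hX :: "nat \<Rightarrow> nat \<Rightarrow> nat \<times> nat \<Rightarrow> gvert" where
  "hX r a x = (if fst x = r then V1 else if fst x = 1 then W1 else if fst x = 2 then W2 else if fst x = 3 then V2
     else P (r - fst x) (tr 2 a (snd x)))"

lemma iso_X:
  assumes r: "r \<ge> 6" and a: "2 \<le> a" "a \<le> n"
  shows "indep_complex (VX r n a) (CK_E r) \<cong>\<^sub>s I_G (r-4) n"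
  unfolding I_G_def
proof (rule indep_iso)
  show "bij_betw (gX r a) (G_V (r-4) n) (VX r n a)"
  proof (rule bij_betw_byWitness[where f'="hX r a"])
    show "\<forall>x\<in>G_V (r - 4) n. hX r a (gX r a x) = x"
      using r a by (auto simp: G_V_def H_V_def PK_V_def gX_def hX_def)
    show "\<forall>y\<in>VX r n a. gX r a (hX r a y) = y"
    proof (intro ballI)
      fix y assume "y \<in> VX r n a"
      moreover obtain p c where y: "y = (p,c)" by force
      ultimately have m: "(p,c) \<in> VX r n a" by simp
      show "gX r a (hX r a y) = y" using m r a unfolding y mem_VX[OF r]
        by (auto simp: gX_def hX_def)
    qed
    show "gX r a ` G_V (r - 4) n \<subseteq> VX r n a"
    proof
      fix y assume "y \<in> gX r a ` G_V (r - 4) n"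
      then obtain x where x: "x \<in> G_V (r - 4) n" "y = gX r a x" by blast
      then show "y \<in> VX r n a" using r a
        by (cases x) (auto simp: G_V_def H_V_def PK_V_def gX_def mem_VX tr_def)
    qed
    show "hX r a ` VX r n a \<subseteq> G_V (r - 4) n"
    proof
      fix x assume "x \<in> hX r a ` VX r n a"
      then obtain p c where m: "(p,c) \<in> VX r n a" and x: "x = hX r a (p,c)" by auto
      have mm: "1 \<le> p \<and> p \<le> r \<and> 1 \<le> c \<and> c \<le> n"
        using m unfolding mem_VX[OF r] by blast
      have s2: "1 \<le> tr 2 a c \<and> tr 2 a c \<le> n" using mm a by (auto simp: tr_def)
      have pr: "1 \<le> p" "p \<le> r" using mm by auto
      have "p = 1 \<or> p = 2 \<or> p = 3 \<or> p = r \<or> (4 \<le> p \<and> p \<le> r - 1)" using pr r by arith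
      then consider "p = 1" | "p = 2" | "p = 3" | "p = r" | "4 \<le> p \<and> p \<le> r - 1" by blast
      then have "hX r a (p,c) \<in> G_V (r - 4) n"
      proof cases
        case 5
        then have "p \<noteq> 1" "p \<noteq> 2" "p \<noteq> 3" "p \<noteq> r" "1 \<le> r - p" "r - p \<le> r - 4" using r by auto
        then show ?thesis using s2 by (simp add: hX_def)
      qed (use r in \<open>simp_all add: hX_def\<close>)
      then show "x \<in> G_V (r - 4) n" using x by simp
    qed
  qed
  fix x y assume x: "x \<in> G_V (r-4) n" and y: "y \<in> G_V (r-4) n"
  show "symc (G_R (r-4)) x y \<longleftrightarrow> CK_E r (gX r a x) (gX r a y)"
    using x y r a
    by (cases x; cases y; simp add: symcG_simps gX_def CK_E_pair tr_vals; simp add: cyc_adj_def; linarith?)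
next
  fix x show "\<not> CK_E r x x" by (rule CK_irr)
next
  fix x assume "x \<in> G_V (r-4) n" then show "\<not> symc (G_R (r-4)) x x"
    by (cases x) (auto simp: symcG_simps G_V_def H_V_def PK_V_def)
qed

definition gY :: "nat \<Rightarrow> nat \<Rightarrow> gvert \<Rightarrow> nat \<times> nat" where
  "gY r a x = (case x of P j c \<Rightarrow> (j + 2, tr 2 a c) | V1 \<Rightarrow> (2,1) | W1 \<Rightarrow> (1,a) | W2 \<Rightarrow> (r,1) | V2 \<Rightarrow> (r - 1,a) | Wm \<Rightarrow> (0,0))"
definition hY :: "nat \<Rightarrow> nat \<Rightarrow> nat \<times> nat \<Rightarrow> gvert" where
  "hY r a x = (if fst x = 2 then V1 else if fst x = 1 then W1 else if fst x = r then W2 else if fst x = r - 1 then V2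
     else P (fst x - 2) (tr 2 a (snd x)))"

lemma iso_Y:
  assumes r: "r \<ge> 6" and a: "2 \<le> a" "a \<le> n"
  shows "indep_complex (VY r n a) (CK_E r) \<cong>\<^sub>s I_G (r-4) n"
  unfolding I_G_def
proof (rule indep_iso)
  show "bij_betw (gY r a) (G_V (r-4) n) (VY r n a)"
  proof (rule bij_betw_byWitness[where f'="hY r a"])
    show "\<forall>x\<in>G_V (r - 4) n. hY r a (gY r a x) = x"
      using r a by (auto simp: G_V_def H_V_def PK_V_def gY_def hY_def)
    show "\<forall>y\<in>VY r n a. gY r a (hY r a y) = y"
    proof (intro ballI)
      fix y assume "y \<in> VY r n a"
      moreover obtain p c where y: "y = (p,c)" by force
      ultimately have m: "(p,c) \<in> VY r n a" by simp
      show "gY r a (hY r a y) = y" using m r a unfolding y mem_VY[OF r]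
        by (auto simp: gY_def hY_def)
    qed
    show "gY r a ` G_V (r - 4) n \<subseteq> VY r n a"
    proof
      fix y assume "y \<in> gY r a ` G_V (r - 4) n"
      then obtain x where x: "x \<in> G_V (r - 4) n" "y = gY r a x" by blast
      then show "y \<in> VY r n a" using r a
        by (cases x) (auto simp: G_V_def H_V_def PK_V_def gY_def mem_VY tr_def)
    qed
    show "hY r a ` VY r n a \<subseteq> G_V (r - 4) n"
    proof
      fix x assume "x \<in> hY r a ` VY r n a"
      then obtain p c where m: "(p,c) \<in> VY r n a" and x: "x = hY r a (p,c)" by auto
      have mm: "1 \<le> p \<and> p \<le> r \<and> 1 \<le> c \<and> c \<le> n"
        using m unfolding mem_VY[OF r] by blast
      have s2: "1 \<le> tr 2 a c \<and> tr 2 a c \<le> n" using mm a by (auto simp: tr_def)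
      have pr: "1 \<le> p" "p \<le> r" using mm by auto
      have "p = 1 \<or> p = 2 \<or> p = r - 1 \<or> p = r \<or> (3 \<le> p \<and> p \<le> r - 2)" using pr r by arith
      then consider "p = 1" | "p = 2" | "p = r - 1" | "p = r" | "3 \<le> p \<and> p \<le> r - 2" by blast
      then have "hY r a (p,c) \<in> G_V (r - 4) n"
      proof cases
        case 5
        then have "p \<noteq> 1" "p \<noteq> 2" "p \<noteq> r - 1" "p \<noteq> r" "1 \<le> p - 2" "p - 2 \<le> r - 4" using r by auto
        then show ?thesis using s2 by (simp add: hY_def)
      qed (use r in \<open>simp_all add: hY_def\<close>)
      then show "x \<in> G_V (r - 4) n" using x by simp
    qed
  qed
  fix x y assume x: "x \<in> G_V (r-4) n" and y: "y \<in> G_V (r-4) n"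
  show "symc (G_R (r-4)) x y \<longleftrightarrow> CK_E r (gY r a x) (gY r a y)"
    using x y r a
    by (cases x; cases y; simp add: symcG_simps gY_def CK_E_pair tr_vals; simp add: cyc_adj_def; linarith?)
next
  fix x show "\<not> CK_E r x x" by (rule CK_irr)
next
  fix x assume "x \<in> G_V (r-4) n" then show "\<not> symc (G_R (r-4)) x x"
    by (cases x) (auto simp: symcG_simps G_V_def H_V_def PK_V_def)
qed

definition gXY :: "nat \<Rightarrow> nat \<Rightarrow> gvert \<Rightarrow> nat \<times> nat" where
  "gXY r a x = (case x of P j c \<Rightarrow> (j + 3, tr 2 a c) | V1 \<Rightarrow> (3,a) | W1 \<Rightarrow> (2,1) | Wm \<Rightarrow> (1,a) | W2 \<Rightarrow> (r,1) | V2 \<Rightarrow> (r - 1,a))"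
definition hXY :: "nat \<Rightarrow> nat \<Rightarrow> nat \<times> nat \<Rightarrow> gvert" where
  "hXY r a x = (if fst x = 3 then V1 else if fst x = 2 then W1 else if fst x = 1 then Wm else if fst x = r then W2
     else if fst x = r - 1 then V2 else P (fst x - 3) (tr 2 a (snd x)))"

lemma iso_XY:
  assumes r7: "r \<ge> 7" and a: "2 \<le> a" "a \<le> n"
  shows "indep_complex (VX r n a \<inter> VY r n a) (CK_E r) \<cong>\<^sub>s I_Wr (r-5) n"
  unfolding I_Wr_def
proof (rule indep_iso)
  have r: "r \<ge> 6" using r7 by simp
  show "bij_betw (gXY r a) (Wr_V (r-5) n) (VX r n a \<inter> VY r n a)"
  proof (rule bij_betw_byWitness[where f'="hXY r a"])
    show "\<forall>x\<in>Wr_V (r - 5) n. hXY r a (gXY r a x) = x"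
    proof
      fix x assume "x \<in> Wr_V (r - 5) n" then show "hXY r a (gXY r a x) = x"
        using r7 a by (cases x) (auto simp: gXY_def hXY_def)
    qed
    show "\<forall>y\<in>VX r n a \<inter> VY r n a. gXY r a (hXY r a y) = y"
    proof (intro ballI)
      fix y assume "y \<in> VX r n a \<inter> VY r n a"
      moreover obtain p c where y: "y = (p,c)" by force
      ultimately have m: "(p,c) \<in> VX r n a" "(p,c) \<in> VY r n a" by simp_all
      show "gXY r a (hXY r a y) = y" using m r7 a unfolding y mem_VX[OF r] mem_VY[OF r]
        by (auto simp: gXY_def hXY_def)
    qed
    show "gXY r a ` Wr_V (r - 5) n \<subseteq> VX r n a \<inter> VY r n a"
    proof
      fix y assume "y \<in> gXY r a ` Wr_V (r - 5) n"
      then obtain x where x: "x \<in> Wr_V (r - 5) n" "y = gXY r a x" by blast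
      then show "y \<in> VX r n a \<inter> VY r n a" using r7 a
        by (cases x) (auto simp: gXY_def mem_VX mem_VY tr_def)
    qed
    show "hXY r a ` (VX r n a \<inter> VY r n a) \<subseteq> Wr_V (r - 5) n"
    proof
      fix x assume "x \<in> hXY r a ` (VX r n a \<inter> VY r n a)"
      then obtain p c where m: "(p,c) \<in> VX r n a" "(p,c) \<in> VY r n a" and x: "x = hXY r a (p,c)" by auto
      have mm: "1 \<le> p \<and> p \<le> r \<and> 1 \<le> c \<and> c \<le> n"
        using m unfolding mem_VX[OF r] by blast
      have s2: "1 \<le> tr 2 a c \<and> tr 2 a c \<le> n" using mm a by (auto simp: tr_def)
      have pr: "1 \<le> p" "p \<le> r" using mm by auto
      have "p = 1 \<or> p = 2 \<or> p = 3 \<or> p = r - 1 \<or> p = r \<or> (4 \<le> p \<and> p \<le> r - 2)" using pr r7 by arith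
      then consider "p = 1" | "p = 2" | "p = 3" | "p = r - 1" | "p = r" | "4 \<le> p \<and> p \<le> r - 2" by blast
      then have "hXY r a (p,c) \<in> Wr_V (r - 5) n"
      proof cases
        case 6
        then have "p \<noteq> 1" "p \<noteq> 2" "p \<noteq> 3" "p \<noteq> r" "p \<noteq> r - 1" "1 \<le> p - 3" "p - 3 \<le> r - 5" using r7 by auto
        then show ?thesis using s2 by (simp add: hXY_def)
      qed (use r7 in \<open>simp_all add: hXY_def\<close>)
      then show "x \<in> Wr_V (r - 5) n" using x by simp
    qed
  qed
  fix x y assume x: "x \<in> Wr_V (r-5) n" and y: "y \<in> Wr_V (r-5) n"
  show "symc (Wr_R (r-5)) x y \<longleftrightarrow> CK_E r (gXY r a x) (gXY r a y)"
    using x y r7 a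
    by (cases x; cases y; simp add: symcWr_simps gXY_def CK_E_pair tr_vals; simp add: cyc_adj_def; linarith?)
next
  fix x show "\<not> CK_E r x x" by (rule CK_irr)
next
  fix x assume "x \<in> Wr_V (r-5) n" then show "\<not> symc (Wr_R (r-5)) x x"
    by (cases x) (auto simp: symcWr_simps)
qed

definition gXYd :: "nat \<Rightarrow> nat \<Rightarrow> nat \<Rightarrow> gvert \<Rightarrow> nat \<times> nat" where
  "gXYd r a b x = (case x of P j c \<Rightarrow> (j + 3, tr 1 a (tr 2 b c)) | V1 \<Rightarrow> (3,a) | W1 \<Rightarrow> (2,1) | W2 \<Rightarrow> (r,1) | V2 \<Rightarrow> (r - 1,b) | Wm \<Rightarrow> (0,0))"
definition hXYd :: "nat \<Rightarrow> nat \<Rightarrow> nat \<Rightarrow> nat \<times> nat \<Rightarrow> gvert" where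
  "hXYd r a b x = (if fst x = 3 then V1 else if fst x = 2 then W1 else if fst x = r then W2
     else if fst x = r - 1 then V2 else P (fst x - 3) (tr 2 b (tr 1 a (snd x))))"

lemma iso_XYd:
  assumes r7: "r \<ge> 7" and a: "2 \<le> a" "a \<le> n" and b: "2 \<le> b" "b \<le> n" and ab: "a \<noteq> b"
  shows "indep_complex (VX r n a \<inter> VY r n b) (CK_E r) \<cong>\<^sub>s I_Hr (r-5) n"
  unfolding I_Hr_def
proof (rule indep_iso)
  have r: "r \<ge> 6" using r7 by simp
  have s1: "\<And>c. tr 1 a (tr 2 b c) = a \<longleftrightarrow> c = 1" "\<And>c. a = tr 1 a (tr 2 b c) \<longleftrightarrow> c = 1"
    "\<And>c. tr 1 a (tr 2 b c) = b \<longleftrightarrow> c = 2" "\<And>c. b = tr 1 a (tr 2 b c) \<longleftrightarrow> c = 2"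
    "\<And>c. tr (Suc 0) a (tr 2 b c) = a \<longleftrightarrow> c = 1" "\<And>c. a = tr (Suc 0) a (tr 2 b c) \<longleftrightarrow> c = 1"
    "\<And>c. tr (Suc 0) a (tr 2 b c) = b \<longleftrightarrow> c = 2" "\<And>c. b = tr (Suc 0) a (tr 2 b c) \<longleftrightarrow> c = 2"
    using a b ab by (auto simp: tr_def)
  have s2: "\<And>c. 1 \<le> c \<Longrightarrow> c \<le> n \<Longrightarrow> 1 \<le> tr 1 a (tr 2 b c) \<and> tr 1 a (tr 2 b c) \<le> n"
    "\<And>c. 1 \<le> c \<Longrightarrow> c \<le> n \<Longrightarrow> 1 \<le> tr 2 b (tr 1 a c) \<and> tr 2 b (tr 1 a c) \<le> n"
    using a b ab by (auto simp: tr_def)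
  show "bij_betw (gXYd r a b) (Hr_V (r-5) n) (VX r n a \<inter> VY r n b)"
  proof (rule bij_betw_byWitness[where f'="hXYd r a b"])
    show "\<forall>x\<in>Hr_V (r - 5) n. hXYd r a b (gXYd r a b x) = x"
    proof
      fix x assume "x \<in> Hr_V (r - 5) n" then show "hXYd r a b (gXYd r a b x) = x"
        using r7 a by (cases x) (auto simp: gXYd_def hXYd_def)
    qed
    show "\<forall>y\<in>VX r n a \<inter> VY r n b. gXYd r a b (hXYd r a b y) = y"
    proof (intro ballI)
      fix y assume "y \<in> VX r n a \<inter> VY r n b"
      moreover obtain p c where y: "y = (p,c)" by force
      ultimately have m: "(p,c) \<in> VX r n a" "(p,c) \<in> VY r n b" by simp_all
      have mm: "1 \<le> p \<and> p \<le> r \<and> 1 \<le> c \<and> c \<le> n \<and>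
   ((p = 2 \<or> p = r) \<longrightarrow> c = 1) \<and> ((p = 1 \<or> p = 3) \<longrightarrow> c = a) \<and> ((p = 1 \<or> p = r - 1) \<longrightarrow> c = b)"
        using m unfolding mem_VX[OF r] mem_VY[OF r] by blast
      have pr: "1 \<le> p" "p \<le> r" using mm by auto
      have "p = 1 \<or> p = 2 \<or> p = 3 \<or> p = r - 1 \<or> p = r \<or> (4 \<le> p \<and> p \<le> r - 2)" using pr r7 by arith
      then consider "p = 1" | "p = 2" | "p = 3" | "p = r - 1" | "p = r" | "4 \<le> p \<and> p \<le> r - 2" by blast
      then have "gXYd r a b (hXYd r a b (p,c)) = (p,c)"
      proof cases
        case 1 then show ?thesis using mm ab by simp
      next
        case 2 then show ?thesis using mm r7 by (simp add: gXYd_def hXYd_def)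
      next
        case 3 then show ?thesis using mm r7 by (simp add: gXYd_def hXYd_def)
      next
        case 4
        then have "p \<noteq> r" "p \<noteq> 2" "p \<noteq> 3" using r7 by auto
        then show ?thesis using mm r7 4 by (simp add: gXYd_def hXYd_def)
      next
        case 5 then show ?thesis using mm r7 by (simp add: gXYd_def hXYd_def)
      next
        case 6 then show ?thesis using mm r7 by (simp add: gXYd_def hXYd_def)
      qed
      then show "gXYd r a b (hXYd r a b y) = y" using y by simp
    qed
    show "gXYd r a b ` Hr_V (r - 5) n \<subseteq> VX r n a \<inter> VY r n b"
    proof
      fix y assume "y \<in> gXYd r a b ` Hr_V (r - 5) n"
      then obtain x where x: "x \<in> Hr_V (r - 5) n" "y = gXYd r a b x" by blast
      then show "y \<in> VX r n a \<inter> VY r n b"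
      proof (cases x)
        case (P j c)
        then have j: "1 \<le> j" "j \<le> r - 5" and c: "1 \<le> c" "c \<le> n" using x by auto
        have "(j + 3, tr 1 a (tr 2 b c)) \<in> VX r n a \<inter> VY r n b"
          using j r7 s2[OF c] unfolding Int_iff mem_VX[OF r] mem_VY[OF r] by auto
        then show ?thesis using x P by (simp add: gXYd_def)
      qed (use x r7 a b in \<open>auto simp: gXYd_def mem_VX mem_VY\<close>)
    qed
    show "hXYd r a b ` (VX r n a \<inter> VY r n b) \<subseteq> Hr_V (r - 5) n"
    proof
      fix x assume "x \<in> hXYd r a b ` (VX r n a \<inter> VY r n b)"
      then obtain p c where m: "(p,c) \<in> VX r n a" "(p,c) \<in> VY r n b" and x: "x = hXYd r a b (p,c)" by auto
      have mm: "1 \<le> p \<and> p \<le> r \<and> 1 \<le> c \<and> c \<le> n \<and>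
   ((p = 2 \<or> p = r) \<longrightarrow> c = 1) \<and> ((p = 1 \<or> p = 3) \<longrightarrow> c = a) \<and> ((p = 1 \<or> p = r - 1) \<longrightarrow> c = b)"
        using m unfolding mem_VX[OF r] mem_VY[OF r] by blast
      have pr: "1 \<le> p" "p \<le> r" using mm by auto
      have "p = 1 \<or> p = 2 \<or> p = 3 \<or> p = r - 1 \<or> p = r \<or> (4 \<le> p \<and> p \<le> r - 2)" using pr r7 by arith
      then consider "p = 1" | "p = 2" | "p = 3" | "p = r - 1" | "p = r" | "4 \<le> p \<and> p \<le> r - 2" by blast
      then have "hXYd r a b (p,c) \<in> Hr_V (r - 5) n"
      proof cases
        case 1 then show ?thesis using mm ab by simp
      next
        case 6
        then have "p \<noteq> 1" "p \<noteq> 2" "p \<noteq> 3" "p \<noteq> r" "p \<noteq> r - 1" "1 \<le> p - 3" "p - 3 \<le> r - 5" using r7 by auto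
        then show ?thesis using mm s2 by (simp add: hXYd_def)
      qed (use r7 in \<open>simp_all add: hXYd_def\<close>)
      then show "x \<in> Hr_V (r - 5) n" using x by simp
    qed
  qed
  fix x y assume x: "x \<in> Hr_V (r-5) n" and y: "y \<in> Hr_V (r-5) n"
  show "symc (Hr_R (r-5)) x y \<longleftrightarrow> CK_E r (gXYd r a b x) (gXYd r a b y)"
    using x y r7 a b ab
    by (cases x; cases y; simp add: symcHr_simps gXYd_def CK_E_pair s1; simp add: cyc_adj_def; linarith?)
next
  fix x show "\<not> CK_E r x x" by (rule CK_irr)
next
  fix x assume "x \<in> Hr_V (r-5) n" then show "\<not> symc (Hr_R (r-5)) x x"
    by (cases x) (auto simp: symcHr_simps)
qed

lemma apex2:
  assumes r: "6 \<le> r" and ab: "a \<noteq> b" and y: "y \<in> VX r n a" "y \<in> VX r n b"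
  shows "\<not> CK_E r (2,1) y \<and> \<not> CK_E r y (2,1)"
proof -
  obtain p c where yp: "y = (p,c)" by force
  have m: "1 \<le> p \<and> p \<le> r \<and> ((p = 1 \<or> p = 3) \<longrightarrow> c = a) \<and> ((p = 1 \<or> p = 3) \<longrightarrow> c = b)"
    using y unfolding yp mem_VX[OF r] by blast
  then show ?thesis unfolding yp CK_E_pair using r ab by (auto simp: cyc_adj_def)
qed

lemma apexr:
  assumes r: "6 \<le> r" and ab: "a \<noteq> b" and y: "y \<in> VY r n a" "y \<in> VY r n b"
  shows "\<not> CK_E r (r,1) y \<and> \<not> CK_E r y (r,1)"
proof -
  obtain p c where yp: "y = (p,c)" by force
  have m: "1 \<le> p \<and> p \<le> r \<and> ((p = 1 \<or> p = r - 1) \<longrightarrow> c = a) \<and> ((p = 1 \<or> p = r - 1) \<longrightarrow> c = b)"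
    using y unfolding yp mem_VY[OF r] by blast
  then show ?thesis unfolding yp CK_E_pair using r ab by (auto simp: cyc_adj_def)
qed

lemma cone_AB:
  assumes r: "6 \<le> r" and n: "1 \<le> n"
    and AB: "A \<subseteq> {1..n-1}" "B \<subseteq> {1..n-1}"
    and two: "(\<exists>i\<in>A. \<exists>j\<in>A. i \<noteq> j) \<or> (\<exists>i\<in>B. \<exists>j\<in>B. i \<noteq> j)"
  shows "contractible_complex ((\<Inter>i\<in>A. indep_complex (VX r n (i+1)) (CK_E r)) \<inter> (\<Inter>i\<in>B. indep_complex (VY r n (i+1)) (CK_E r)))"
    (is "contractible_complex ?S")
proof -
  have inX: "(2,1) \<in> VX r n c" "(r,1) \<in> VX r n c" for c using r n by (auto simp: mem_VX)
  have inY: "(2,1) \<in> VY r n c" "(r,1) \<in> VY r n c" for c using r n by (auto simp: mem_VY)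
  have gen: "contractible_complex ?S"
    if xX: "\<And>c. x \<in> VX r n c" and xY: "\<And>c. x \<in> VY r n c"
      and na: "\<And>\<sigma>. \<sigma> \<in> ?S \<Longrightarrow> \<forall>y\<in>\<sigma>. \<not> CK_E r x y \<and> \<not> CK_E r y x" for x
  proof (rule cone_contractible[of x])
    show "{x} \<in> ?S" using xX xY by (auto intro!: indep_single simp: CK_irr)
    fix \<sigma> assume s: "\<sigma> \<in> ?S"
    show "insert x \<sigma> \<in> ?S" using s xX xY na[OF s] by (auto intro!: indep_insert simp: CK_irr)
  qed
  from two show ?thesis
  proof
    assume "\<exists>i\<in>A. \<exists>j\<in>A. i \<noteq> j"
    then obtain i j where ij: "i \<in> A" "j \<in> A" "i \<noteq> j" by blast
    show ?thesis
    proof (rule gen[of "(2,1)"])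
      fix \<sigma> assume "\<sigma> \<in> ?S"
      then have "\<sigma> \<in> indep_complex (VX r n (i+1)) (CK_E r)" "\<sigma> \<in> indep_complex (VX r n (j+1)) (CK_E r)"
        using ij by auto
      then have "\<forall>y\<in>\<sigma>. y \<in> VX r n (i+1) \<and> y \<in> VX r n (j+1)" by (auto simp: indep_complex_def)
      then show "\<forall>y\<in>\<sigma>. \<not> CK_E r (2,1) y \<and> \<not> CK_E r y (2,1)" using apex2[OF r, of "i+1" "j+1"] ij by auto
    qed (use inX inY in auto)
  next
    assume "\<exists>i\<in>B. \<exists>j\<in>B. i \<noteq> j"
    then obtain i j where ij: "i \<in> B" "j \<in> B" "i \<noteq> j" by blast
    show ?thesis
    proof (rule gen[of "(r,1)"])
      fix \<sigma> assume "\<sigma> \<in> ?S"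
      then have "\<sigma> \<in> indep_complex (VY r n (i+1)) (CK_E r)" "\<sigma> \<in> indep_complex (VY r n (j+1)) (CK_E r)"
        using ij by auto
      then have "\<forall>y\<in>\<sigma>. y \<in> VY r n (i+1) \<and> y \<in> VY r n (j+1)" by (auto simp: indep_complex_def)
      then show "\<forall>y\<in>\<sigma>. \<not> CK_E r (r,1) y \<and> \<not> CK_E r y (r,1)" using apexr[OF r, of "i+1" "j+1"] ij by auto
    qed (use inX inY in auto)
  qed
qed

lemma nbhd_eq:
  assumes r: "6 \<le> r"
  shows "nbhd (CK_V r n) (CK_E r) (1,1) = (\<lambda>i. (2::nat, i+1)) ` {1..n-1} \<union> (\<lambda>i. (r, i+1)) ` {1..n-1}"
proof (rule set_eqI)
  fix u :: "nat \<times> nat"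
  obtain p c where u: "u = (p,c)" by force
  have "u \<in> nbhd (CK_V r n) (CK_E r) (1,1) \<longleftrightarrow> (p = 2 \<or> p = r) \<and> 2 \<le> c \<and> c \<le> n"
    unfolding u nbhd_def CK_V_def using r by (auto simp: cyc_adj_def CK_E_def)
  also have "\<dots> \<longleftrightarrow> u \<in> (\<lambda>i. (2::nat, i+1)) ` {1..n-1} \<union> (\<lambda>i. (r, i+1)) ` {1..n-1}"
  proof
    assume h: "(p = 2 \<or> p = r) \<and> 2 \<le> c \<and> c \<le> n"
    then have "c - 1 \<in> {1..n-1}" "c = (c - 1) + 1" by auto
    then show "u \<in> (\<lambda>i. (2::nat, i+1)) ` {1..n-1} \<union> (\<lambda>i. (r, i+1)) ` {1..n-1}"
      using h unfolding u by blast
  next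
    assume "u \<in> (\<lambda>i. (2::nat, i+1)) ` {1..n-1} \<union> (\<lambda>i. (r, i+1)) ` {1..n-1}"
    then show "(p = 2 \<or> p = r) \<and> 2 \<le> c \<and> c \<le> n" unfolding u by auto
  qed
  finally show "u \<in> nbhd (CK_V r n) (CK_E r) (1,1) \<longleftrightarrow> u \<in> (\<lambda>i. (2::nat, i+1)) ` {1..n-1} \<union> (\<lambda>i. (r, i+1)) ` {1..n-1}" .
qed

lemma union_eq:
  assumes r: "6 \<le> r" and n: "1 \<le> n"
  shows "star (indep_complex (CK_V r n) (CK_E r)) {(1,1)} \<inter> star_cluster (CK_V r n) (CK_E r) (1,1)
     = (\<Union>i\<in>{1..n-1}. indep_complex (VX r n (i+1)) (CK_E r) \<union> indep_complex (VY r n (i+1)) (CK_E r))"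
proof -
  let ?V = "CK_V r n" and ?E = "CK_E r"
  define Z where "Z u = indep_complex {x \<in> ?V. \<not> ?E x (1,1) \<and> \<not> ?E x u} ?E" for u
  have st: "star (indep_complex ?V ?E) {u} = indep_complex {x \<in> ?V. \<not> ?E x u} ?E" if "u \<in> ?V" for u
  proof -
    have "star (indep_complex ?V ?E) {u} = indep_complex {x \<in> ?V. \<not> ?E x u \<and> \<not> ?E u x} ?E"
      by (rule star_indep[OF that CK_irr])
    also have "{x \<in> ?V. \<not> ?E x u \<and> \<not> ?E u x} = {x \<in> ?V. \<not> ?E x u}" using CK_sym by blast
    finally show ?thesis .
  qed
  have v: "(1,1) \<in> ?V" using r n by (auto simp: CK_V_def)
  have nb: "nbhd ?V ?E (1,1) \<subseteq> ?V" by (auto simp: nbhd_def)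
  have "star (indep_complex ?V ?E) {(1,1)} \<inter> star_cluster ?V ?E (1,1)
      = (\<Union>u\<in>nbhd ?V ?E (1,1). star (indep_complex ?V ?E) {(1,1)} \<inter> star (indep_complex ?V ?E) {u})"
    unfolding star_cluster_def by blast
  also have "\<dots> = (\<Union>u\<in>nbhd ?V ?E (1,1). Z u)"
  proof (rule SUP_cong[OF refl])
    fix u assume "u \<in> nbhd ?V ?E (1,1)"
    then have u: "u \<in> ?V" using nb by blast
    show "star (indep_complex ?V ?E) {(1,1)} \<inter> star (indep_complex ?V ?E) {u} = Z u"
      unfolding st[OF v] st[OF u] indep_Int Z_def by (rule arg_cong[where f="\<lambda>U. indep_complex U ?E"]) blast
  qed
  also have "\<dots> = (\<Union>i\<in>{1..n-1}. Z (2, i+1) \<union> Z (r, i+1))"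
    unfolding nbhd_eq[OF r] by blast
  also have "\<dots> = (\<Union>i\<in>{1..n-1}. indep_complex (VX r n (i+1)) (CK_E r) \<union> indep_complex (VY r n (i+1)) (CK_E r))"
    unfolding Z_def VX_def VY_def by simp
  finally show ?thesis .
qed

theorem mainTheorem17:
  fixes r n :: nat
  assumes "r \<ge> 6" and "n \<ge> 3"
  defines "K \<equiv> indep_complex (CK_V r n) (CK_E r)"
      and "v \<equiv> (1::nat, 1::nat)"
  shows "\<exists>X Y :: nat \<Rightarrow> (nat \<times> nat) set set.
     (\<forall>i\<in>{1..n-1}. subcomplex (X i) K \<and> subcomplex (Y i) K) \<and>
     star K {v} \<inter> star_cluster (CK_V r n) (CK_E r) v = (\<Union>i\<in>{1..n-1}. X i \<union> Y i) \<and>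
     (\<forall>i\<in>{1..n-1}. X i \<cong>\<^sub>s I_G (r - 4) n \<and> Y i \<cong>\<^sub>s I_G (r - 4) n) \<and>
     (r \<ge> 7 \<longrightarrow> (\<forall>i\<in>{1..n-1}. (X i \<inter> Y i) \<cong>\<^sub>s I_Wr (r - 5) n)) \<and>
     (r \<ge> 7 \<longrightarrow> (\<forall>i\<in>{1..n-1}. \<forall>j\<in>{1..n-1}. i \<noteq> j \<longrightarrow> (X i \<inter> Y j) \<cong>\<^sub>s I_Hr (r - 5) n)) \<and>
     (\<forall>i\<in>{1..n-1}. \<forall>j\<in>{1..n-1}. i \<noteq> j \<longrightarrow>
        contractible_complex (X i \<inter> X j) \<and> contractible_complex (Y i \<inter> Y j)) \<and>
     (\<forall>A B. A \<subseteq> {1..n-1} \<longrightarrow> B \<subseteq> {1..n-1} \<longrightarrow> card A + card B \<ge> 3 \<longrightarrow>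
        contractible_complex ((\<Inter>i\<in>A. X i) \<inter> (\<Inter>i\<in>B. Y i)))"
proof -
  have r: "6 \<le> r" and n: "1 \<le> n" using assms by auto
  define X where "X i = indep_complex (VX r n (i+1)) (CK_E r)" for i
  define Y where "Y i = indep_complex (VY r n (i+1)) (CK_E r)" for i
  have ai: "2 \<le> i + 1" "i + 1 \<le> n" if "i \<in> {1..n-1}" for i using that n by auto
  have c1: "\<forall>i\<in>{1..n-1}. subcomplex (X i) K \<and> subcomplex (Y i) K"
    unfolding X_def Y_def K_def by (auto intro!: indep_sub simp: VX_def VY_def)
  have c2: "star K {v} \<inter> star_cluster (CK_V r n) (CK_E r) v = (\<Union>i\<in>{1..n-1}. X i \<union> Y i)"
    unfolding K_def v_def X_def Y_def by (rule union_eq[OF r n])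
  have c3: "\<forall>i\<in>{1..n-1}. X i \<cong>\<^sub>s I_G (r - 4) n \<and> Y i \<cong>\<^sub>s I_G (r - 4) n"
    unfolding X_def Y_def using iso_X[OF r] iso_Y[OF r] ai by blast
  have c4: "r \<ge> 7 \<longrightarrow> (\<forall>i\<in>{1..n-1}. (X i \<inter> Y i) \<cong>\<^sub>s I_Wr (r - 5) n)"
    unfolding X_def Y_def indep_Int using iso_XY ai by blast
  have c5: "r \<ge> 7 \<longrightarrow> (\<forall>i\<in>{1..n-1}. \<forall>j\<in>{1..n-1}. i \<noteq> j \<longrightarrow> (X i \<inter> Y j) \<cong>\<^sub>s I_Hr (r - 5) n)"
  proof (intro impI ballI)
    fix i j assume r7: "7 \<le> r" and i: "i \<in> {1..n-1}" and j: "j \<in> {1..n-1}" and ij: "i \<noteq> j"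
    show "(X i \<inter> Y j) \<cong>\<^sub>s I_Hr (r - 5) n"
      unfolding X_def Y_def indep_Int using iso_XYd[OF r7 ai[OF i] ai[OF j]] ij by simp
  qed
  have c6: "\<forall>i\<in>{1..n-1}. \<forall>j\<in>{1..n-1}. i \<noteq> j \<longrightarrow>
        contractible_complex (X i \<inter> X j) \<and> contractible_complex (Y i \<inter> Y j)"
  proof (intro ballI impI conjI)
    fix i j assume i: "i \<in> {1..n-1}" and j: "j \<in> {1..n-1}" and ij: "i \<noteq> j"
    have "contractible_complex ((\<Inter>k\<in>{i,j}. X k) \<inter> (\<Inter>k\<in>{}. Y k))"
      unfolding X_def Y_def by (rule cone_AB[OF r n]) (use i j ij in auto)
    then show "contractible_complex (X i \<inter> X j)" by simp
    have "contractible_complex ((\<Inter>k\<in>{}. X k) \<inter> (\<Inter>k\<in>{i,j}. Y k))"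
      unfolding X_def Y_def by (rule cone_AB[OF r n]) (use i j ij in auto)
    then show "contractible_complex (Y i \<inter> Y j)" by simp
  qed
  have c7: "\<forall>A B. A \<subseteq> {1..n-1} \<longrightarrow> B \<subseteq> {1..n-1} \<longrightarrow> card A + card B \<ge> 3 \<longrightarrow>
        contractible_complex ((\<Inter>i\<in>A. X i) \<inter> (\<Inter>i\<in>B. Y i))"
  proof (intro allI impI)
    fix A B :: "nat set" assume A: "A \<subseteq> {1..n-1}" and B: "B \<subseteq> {1..n-1}" and c: "card A + card B \<ge> 3"
    have fA: "finite A" and fB: "finite B" using A B finite_subset by blast+
    have "card A \<ge> 2 \<or> card B \<ge> 2" using c by linarith
    then have "(\<exists>i\<in>A. \<exists>j\<in>A. i \<noteq> j) \<or> (\<exists>i\<in>B. \<exists>j\<in>B. i \<noteq> j)"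
      using card_le_Suc0_iff_eq[OF fA] card_le_Suc0_iff_eq[OF fB] by fastforce
    then show "contractible_complex ((\<Inter>i\<in>A. X i) \<inter> (\<Inter>i\<in>B. Y i))"
      unfolding X_def Y_def by (rule cone_AB[OF r n A B])
  qed
  show ?thesis by (intro exI[of _ X] exI[of _ Y] conjI c1 c2 c3 c4 c5 c6 c7)
qed

end
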